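(* Let $a<b$, $n\in\mathbb{N}$, and let $X_n=\{x_0,\dots,x_n\}$ with $a=x_0<x_1<\dots<x_n=b$. Let $S=\{s_1,\dots,s_m\}\subset(a,b)$ be such that $s_\ell\in(x_{\alpha_\ell},x_{\alpha_\ell+1})$ for integers $0<\alpha_1<\dots<\alpha_m<n-1$ satisfying $\alpha_\ell+1<\alpha_{\ell+1}$ for $\ell=1,\dots,m-1$. Define $$I_0=[x_0,x_{\alpha_1}],\qquad I_\ell=[x_{\alpha_\ell+1},x_{\alpha_{\ell+1}}]\ (\ell=1,\dots,m-1),\qquad I_m=[x_{\alpha_m+1},x_n],$$ $h^{\min}=\min_{\ell}|I_\ell|$, and $$h^{\max}_{X_n}=\max\{\,x_{i+1}-x_i:\ 0\le i\le n-1,\ s_\ell\notin(x_i,x_{i+1})\ \forall \ell\,\}.$$ Assume $h^{\min}\ge h^{\max}_{X_n}$. For $r>0$ and $x\in[a,b]$ let $\mathcal{I}_{r,x}$ be the set of closed intervals $I\subset\bigcup_{\ell=0}^m I_\ell$ with $|I|=r$ and $x\in I$, and let $$r_0=\inf\Big\{r\in\mathbb{R}_+:\ r\le h^{\min}\ \text{and}\ \forall x\in\textstyle\bigcup_{\ell=0}^m I_\ell\ \exists I\in\mathcal{I}_{r,x}\ \text{with}\ \mathrm{card}(I\cap X_n)\ge 1\Big\}.$$ Then for every $\ell=0,\dots,m$ there exist closed intervals $U_{\ell,1},\dots,U_{\ell,n_\ell}$ such that $|U_{\ell,j}|=r_0$ and $\mathrm{card}(U_{\ell,j}\cap X_n)\ge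 1$ for all $j=1,\dots,n_\ell$, $U_{\ell,j}\cap U_{\ell,j+1}\neq\emptyset$ for all $j=1,\dots,n_\ell-1$, and $I_\ell=\bigcup_{j=1}^{n_\ell}U_{\ell,j}$.
   Context: $\mathbb{R}_+$ denotes the positive reals; $\mathrm{card}$ denotes cardinality and $|I|$ the length of an interval $I$. *)

theory Defs
  imports Complex_Main
begin

definition closed_interval_len :: "real set \<Rightarrow> real \<Rightarrow> bool" where
  "closed_interval_len I r \<longleftrightarrow> (\<exists>c d. c \<le> d \<and> I = {c..d} \<and> d - c = r)"

definition Ileft :: "(nat \<Rightarrow> real) \<Rightarrow> (nat \<Rightarrow> nat) \<Rightarrow> nat \<Rightarrow> real" where
  "Ileft x \<alpha> l = (if l = 0 then x 0 else x (\<alpha> l + 1))"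

definition Iright :: "(nat \<Rightarrow> real) \<Rightarrow> (nat \<Rightarrow> nat) \<Rightarrow> nat \<Rightarrow> nat \<Rightarrow> nat \<Rightarrow> real" where
  "Iright x \<alpha> n m l = (if l < m then x (\<alpha> (l + 1)) else x n)"

end

theory Submission
  imports Defs
begin

lemma find_cell:
  fixes x :: "nat \<Rightarrow> real"
  assumes "p < q" "x p \<le> y" "y \<le> x q"
  shows "\<exists>k. p \<le> k \<and> k < q \<and> x k \<le> y \<and> y \<le> x (Suc k)"
  using assms
proof (induction q)
  case 0 then show ?case by simp
next
  case (Suc q)
  show ?case
  proof (cases "p < q \<and> y \<le> x q")
    case True then show ?thesis using Suc by (meson less_SucI)
  next
    case False
    then have "x q \<le> y" using Suc.prems by (metis less_Suc_eq linorder_le_cases)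
    then show ?thesis using Suc.prems by (intro exI[of _ q]) auto
  qed
qed

lemma cover:
  fixes x :: "nat \<Rightarrow> real" and r :: real
  assumes pq: "p < q" and r0: "0 \<le> r" and rle: "r \<le> x q - x p"
    and mono: "\<And>k. p \<le> k \<Longrightarrow> k \<le> q \<Longrightarrow> x p \<le> x k \<and> x k \<le> x q"
    and cell: "\<And>k. p \<le> k \<Longrightarrow> k < q \<Longrightarrow> x k \<le> x (Suc k) \<and> x (Suc k) - x k \<le> 2*r"
  shows "\<exists>(nl::nat) U. (\<forall>j\<in>{1..nl}. closed_interval_len (U j) r \<and> U j \<inter> x ` {p..q} \<noteq> {}) \<and>
           (\<forall>j\<in>{1..<nl}. U j \<inter> U (j+1) \<noteq> {}) \<and> {x p..x q} = (\<Union>j\<in>{1..nl}. U j)"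
proof -
  define a where "a k = min (x k) (x q - r)" for k
  define b where "b k = max (x (Suc k) - r) (x p)" for k
  define U where "U j = (if even (j - 1) then {a (p + (j-1) div 2) .. a (p + (j-1) div 2) + r}
      else {b (p + (j-1) div 2) .. b (p + (j-1) div 2) + r})" for j
  define nl where "nl = 2 * (q - p)"
  have U1: "U (2*t+1) = {a (p+t) .. a (p+t) + r}" for t by (simp add: U_def)
  have U2: "U (2*t+2) = {b (p+t) .. b (p+t) + r}" for t by (simp add: U_def)
  have A: "x p \<le> a k \<and> a k \<le> x k \<and> x k \<le> a k + r \<and> a k + r \<le> x q" if "p \<le> k" "k < q" for k
    using mono[of k] rle r0 that by (auto simp: a_def)
  have B: "x p \<le> b k \<and> b k \<le> x (Suc k) \<and> x (Suc k) \<le> b k + r \<and> b k + r \<le> x q" if "p \<le> k" "k < q" for k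
    using mono[of "Suc k"] rle r0 that by (auto simp: b_def)
  have AB: "b k \<le> a k + r" if "p \<le> k" "k < q" for k
    using mono[of k] mono[of "Suc k"] cell[of k] rle that by (auto simp: a_def b_def)
  have par: "\<exists>t. j = 2*t+1 \<or> j = 2*t+2" if "1 \<le> j" for j::nat
    using that by presburger
  have P1: "closed_interval_len (U j) r \<and> U j \<inter> x ` {p..q} \<noteq> {} \<and> U j \<subseteq> {x p..x q}"
    if jj: "j \<in> {1..nl}" for j
  proof -
    obtain t where t: "j = 2*t+1 \<or> j = 2*t+2" using par[of j] jj by auto
    have tq: "p + t < q" using t that by (auto simp: nl_def)
    show ?thesis
    proof (cases "j = 2*t+1")
      case True
      have "x (p+t) \<in> U j \<inter> x ` {p..q}" using A[of "p+t"] tq True U1 by auto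
      then show ?thesis using A[of "p+t"] tq True U1 r0 unfolding closed_interval_len_def by auto
    next
      case False
      then have j: "j = 2*t+2" using t by auto
      have "x (Suc (p+t)) \<in> U j \<inter> x ` {p..q}" using B[of "p+t"] tq j U2 by auto
      then show ?thesis using B[of "p+t"] tq j U2 r0 unfolding closed_interval_len_def by auto
    qed
  qed
  have P2: "U j \<inter> U (j+1) \<noteq> {}" if jj: "j \<in> {1..<nl}" for j
  proof -
    obtain t where t: "j = 2*t+1 \<or> j = 2*t+2" using par[of j] jj by auto
    show ?thesis
    proof (cases "j = 2*t+1")
      case True
      have tq: "p + t < q" using True that by (auto simp: nl_def)
      have "j + 1 = 2*t+2" using True by simp
      then have "max (a (p+t)) (b (p+t)) \<in> U j \<inter> U (j+1)"
        using True U1 U2 A[of "p+t"] B[of "p+t"] AB[of "p+t"] cell[of "p+t"] tq r0 by auto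
      then show ?thesis by blast
    next
      case False
      then have j: "j = 2*t+2" using t by auto
      have tq: "p + Suc t < q" using j that by (auto simp: nl_def)
      have j1: "j + 1 = 2*(Suc t)+1" using j by simp
      have "x (Suc (p+t)) \<in> U j \<inter> U (j+1)"
        using j U2[of t] U1[of "Suc t"] j1 A[of "p+Suc t"] B[of "p+t"] tq by auto
      then show ?thesis by blast
    qed
  qed
  have P3: "{x p..x q} \<subseteq> (\<Union>j\<in>{1..nl}. U j)"
  proof
    fix y assume y: "y \<in> {x p..x q}"
    then obtain k where k: "p \<le> k" "k < q" "x k \<le> y" "y \<le> x (Suc k)"
      using find_cell[OF pq] by auto
    define t where "t = k - p"
    have kt: "k = p + t" using k t_def by simp
    have t1: "2*t+1 \<in> {1..nl}" "2*t+2 \<in> {1..nl}" using k kt by (auto simp: nl_def)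
    show "y \<in> (\<Union>j\<in>{1..nl}. U j)"
    proof (cases "y \<le> a k + r")
      case True
      then have "y \<in> U (2*t+1)" using U1 A[of k] k kt by auto
      then show ?thesis using t1 by blast
    next
      case False
      then have "y \<in> U (2*t+2)" using U2 A[of k] B[of k] AB[of k] k kt by auto
      then show ?thesis using t1 by blast
    qed
  qed
  have "(\<forall>j\<in>{1..nl}. closed_interval_len (U j) r \<and> U j \<inter> x ` {p..q} \<noteq> {}) \<and>
           (\<forall>j\<in>{1..<nl}. U j \<inter> U (j+1) \<noteq> {}) \<and> {x p..x q} = (\<Union>j\<in>{1..nl}. U j)"
    using P1 P2 P3 by blast
  then show ?thesis by blast
qed

theorem theorem2:
  fixes a b :: real and n m :: nat and x s :: "nat \<Rightarrow> real" and \<alpha> :: "nat \<Rightarrow> nat"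
    and X :: "real set" and I :: "nat \<Rightarrow> real set" and hmin hmax r0 :: real
  assumes "a < b"
    and "x 0 = a" and "x n = b"
    and "\<And>i. i < n \<Longrightarrow> x i < x (i + 1)"
    and "X = x ` {0..n}"
    and "\<And>l. l \<in> {1..m} \<Longrightarrow> 0 < \<alpha> l \<and> \<alpha> l < n - 1"
    and "\<And>l. l \<in> {1..<m} \<Longrightarrow> \<alpha> l + 1 < \<alpha> (l + 1)"
    and "\<And>l. l \<in> {1..m} \<Longrightarrow> s l \<in> {x (\<alpha> l)<..<x (\<alpha> l + 1)}"
    and I_def: "I = (\<lambda>l. {Ileft x \<alpha> l .. Iright x \<alpha> n m l})"
    and hmin_def: "hmin = Min ((\<lambda>l. Iright x \<alpha> n m l - Ileft x \<alpha> l) ` {0..m})"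
    and hmax_def: "hmax = Max {x (i + 1) - x i | i. i < n \<and>
                       (\<forall>l\<in>{1..m}. s l \<notin> {x i<..<x (i + 1)})}"
    and "hmin \<ge> hmax"
    and r0_def: "r0 = Inf {r. r > 0 \<and> r \<le> hmin \<and>
                   (\<forall>y\<in>(\<Union>l\<in>{0..m}. I l). \<exists>J. closed_interval_len J r \<and>
                       J \<subseteq> (\<Union>l\<in>{0..m}. I l) \<and> y \<in> J \<and> card (J \<inter> X) \<ge> 1)}"
  shows "\<forall>l\<in>{0..m}. \<exists>(nl::nat) (U::nat \<Rightarrow> real set).
           (\<forall>j\<in>{1..nl}. closed_interval_len (U j) r0 \<and> card (U j \<inter> X) \<ge> 1) \<and>
           (\<forall>j\<in>{1..<nl}. U j \<inter> U (j + 1) \<noteq> {}) \<and>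
           I l = (\<Union>j\<in>{1..nl}. U j)"
proof -
  note xs = assms(4)
  have strict: "x i < x j" if "i < j" "j \<le> n" for i j
    using that
  proof (induction j)
    case 0 then show ?case by simp
  next
    case (Suc j)
    show ?case
    proof (cases "i = j")
      case True then show ?thesis using xs[of j] Suc.prems by simp
    next
      case False
      then have "x i < x j" using Suc by simp
      then show ?thesis using xs[of j] Suc.prems by simp
    qed
  qed
  have monox: "x i \<le> x j" if "i \<le> j" "j \<le> n" for i j
    using strict[of i j] that by (cases "i = j") auto
  have amono: "\<alpha> j + 1 < \<alpha> k" if "1 \<le> j" "j < k" "k \<le> m" for j k
    using that
  proof (induction k)
    case 0 then show ?case by simp
  next
    case (Suc k)
    have st: "\<alpha> k + 1 < \<alpha> (k + 1)" using assms(7)[of k] Suc.prems by auto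
    show ?case
    proof (cases "j = k")
      case True then show ?thesis using st by simp
    next
      case False
      then have "\<alpha> j + 1 < \<alpha> k" using Suc by simp
      then show ?thesis using st by simp
    qed
  qed
  have ale: "\<alpha> j \<le> \<alpha> k" if "1 \<le> j" "j \<le> k" "k \<le> m" for j k
    using amono[of j k] that by (cases "j = k") auto
  define p where "p l = (if l = 0 then 0 else \<alpha> l + 1)" for l
  define q where "q l = (if l < m then \<alpha> (l + 1) else n)" for l
  have IL: "Ileft x \<alpha> l = x (p l)" for l by (simp add: Ileft_def p_def)
  have IR: "Iright x \<alpha> n m l = x (q l)" for l by (simp add: Iright_def q_def)
  have Ieq: "I l = {x (p l) .. x (q l)}" for l by (simp add: I_def IL IR)
  have n0: "0 < n" using assms(1-3) by (cases n) auto
  have pq: "p l < q l \<and> q l \<le> n" if "l \<le> m" for l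
  proof (cases "l = 0")
    case True
    then show ?thesis
    proof (cases "m = 0")
      case True then show ?thesis using \<open>l = 0\<close> n0 by (auto simp: p_def q_def)
    next
      case False
      then show ?thesis using \<open>l = 0\<close> assms(6)[of 1] by (auto simp: p_def q_def)
    qed
  next
    case False
    then show ?thesis
    proof (cases "l < m")
      case True
      then show ?thesis using False assms(7)[of l] assms(6)[of "l+1"] by (auto simp: p_def q_def)
    next
      case False
      then show ?thesis using \<open>l \<noteq> 0\<close> that assms(6)[of l] by (auto simp: p_def q_def)
    qed
  qed
  have notal: "i \<noteq> \<alpha> k" if "l \<le> m" "p l \<le> i" "i < q l" "k \<in> {1..m}" for l i k
  proof (cases "l = 0")
    case True
    then have "m > 0" "i < \<alpha> 1" using that by (auto simp: p_def q_def)
    then show ?thesis using ale[of 1 k] that by auto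
  next
    case False
    show ?thesis
    proof (cases "l < m")
      case True
      then have i: "\<alpha> l + 1 \<le> i" "i < \<alpha> (l+1)" using that False by (auto simp: p_def q_def)
      show ?thesis
      proof (cases "k \<le> l")
        case True then show ?thesis using ale[of k l] i that by auto
      next
        case False then show ?thesis using ale[of "l+1" k] i that by auto
      qed
    next
      case False
      then have "\<alpha> m + 1 \<le> i" "l = m" using that \<open>l \<noteq> 0\<close> by (auto simp: p_def q_def)
      then show ?thesis using ale[of k m] that by auto
    qed
  qed
  have cellok: "\<forall>k\<in>{1..m}. s k \<notin> {x i<..<x (i+1)}" if "l \<le> m" "p l \<le> i" "i < q l" for l i
  proof
    fix k assume k: "k \<in> {1..m}"
    have ne: "i \<noteq> \<alpha> k" using notal[OF that k] .
    have sk: "s k \<in> {x (\<alpha> k)<..<x (\<alpha> k + 1)}" using assms(8) k by auto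
    have an1: "\<alpha> k < n - 1" using assms(6)[OF k] by simp
    have an: "\<alpha> k + 1 \<le> n" "i + 1 \<le> n" using an1 pq[OF that(1)] that by auto
    show "s k \<notin> {x i<..<x (i+1)}"
    proof (cases "i < \<alpha> k")
      case True
      then have "x (i+1) \<le> x (\<alpha> k)" using monox[of "i+1" "\<alpha> k"] an by auto
      then show ?thesis using sk by auto
    next
      case False
      then have "x (\<alpha> k + 1) \<le> x i" using monox[of "\<alpha> k + 1" i] an ne by auto
      then show ?thesis using sk by auto
    qed
  qed
  have fin: "finite {x (i + 1) - x i | i. i < n \<and> (\<forall>l\<in>{1..m}. s l \<notin> {x i<..<x (i + 1)})}"
    by (rule finite_subset[of _ "(\<lambda>i. x (i + 1) - x i) ` {..<n}"]) auto
  have cellh: "x (i+1) - x i \<le> hmax" if "l \<le> m" "p l \<le> i" "i < q l" for l i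
  proof -
    have "i < n" using pq[OF that(1)] that by auto
    then have "x (i+1) - x i \<in> {x (i + 1) - x i | i. i < n \<and> (\<forall>l\<in>{1..m}. s l \<notin> {x i<..<x (i + 1)})}"
      using cellok[OF that] by blast
    then show ?thesis unfolding hmax_def using fin by (rule Max_ge[rotated])
  qed
  have hminle: "hmin \<le> x (q l) - x (p l)" if "l \<le> m" for l
    unfolding hmin_def using that by (intro Min_le) (auto simp: IL IR)
  have hminpos: "hmin > 0"
  proof -
    have "hmin \<in> (\<lambda>l. Iright x \<alpha> n m l - Ileft x \<alpha> l) ` {0..m}"
      unfolding hmin_def by (rule Min_in) auto
    then obtain l where "l \<le> m" "hmin = x (q l) - x (p l)" by (auto simp: IL IR)
    then show ?thesis using pq[of l] strict[of "p l" "q l"] by auto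
  qed
  have finX: "finite X" using assms(5) by simp
  define UU where "UU = (\<Union>l\<in>{0..m}. I l)"
  define R where "R = {r. r > 0 \<and> r \<le> hmin \<and>
                   (\<forall>y\<in>(\<Union>l\<in>{0..m}. I l). \<exists>J. closed_interval_len J r \<and>
                       J \<subseteq> (\<Union>l\<in>{0..m}. I l) \<and> y \<in> J \<and> card (J \<inter> X) \<ge> 1)}"
  have r0R: "r0 = Inf R" using r0_def R_def by simp
  have hminR: "hmin \<in> R"
  proof -
    have "\<exists>J. closed_interval_len J hmin \<and> J \<subseteq> (\<Union>l\<in>{0..m}. I l) \<and> y \<in> J \<and> card (J \<inter> X) \<ge> 1"
      if y: "y \<in> (\<Union>l\<in>{0..m}. I l)" for y
    proof -
      obtain l where l: "l \<le> m" "y \<in> {x (p l) .. x (q l)}" using y Ieq by auto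
      obtain k where k: "p l \<le> k" "k < q l" "x k \<le> y" "y \<le> x (Suc k)"
        using find_cell[of "p l" "q l" x y] pq[OF l(1)] l(2) by auto
      have hk: "x (Suc k) - x k \<le> hmin" using cellh[OF l(1) k(1,2)] assms(12) by simp
      have hl: "hmin \<le> x (q l) - x (p l)" using hminle[OF l(1)] .
      have mk: "x (p l) \<le> x k" "x k \<le> x (q l)" using monox pq[OF l(1)] k by auto
      define c where "c = min (x k) (x (q l) - hmin)"
      define J where "J = {c .. c + hmin}"
      have J1: "closed_interval_len J hmin" unfolding closed_interval_len_def J_def
        using hminpos by auto
      have J2: "J \<subseteq> I l" unfolding J_def Ieq c_def using hl mk by auto
      have J3: "y \<in> J" unfolding J_def c_def using hk k l by auto
      have xkJ: "x k \<in> J \<inter> X" unfolding J_def c_def using hminpos mk assms(5) pq[OF l(1)] k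
        by auto
      have "card (J \<inter> X) > 0" using xkJ finX by (subst card_gt_0_iff) auto
      then show ?thesis using J1 J2 J3 l(1) by (intro exI[of _ J]) auto
    qed
    then show ?thesis unfolding R_def using hminpos by auto
  qed
  have R0: "r > 0" if "r \<in> R" for r using that R_def by auto
  have r0le: "r0 \<le> hmin" unfolding r0R
    by (rule cInf_lower[OF hminR]) (meson R0 bdd_belowI less_imp_le)
  have r0ge: "(x (i+1) - x i) / 2 \<le> r0" if "l \<le> m" "p l \<le> i" "i < q l" for l i
    unfolding r0R
  proof (rule cInf_greatest)
    show "R \<noteq> {}" using hminR by auto
    fix r assume r: "r \<in> R"
    define y where "y = (x i + x (i+1)) / 2"
    have iq: "i + 1 \<le> q l" "q l \<le> n" using that pq[OF that(1)] by auto
    have xi: "x i < x (i+1)" using xs[of i] iq by auto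
    have "x (p l) \<le> x i" "x (i+1) \<le> x (q l)" using monox that iq by auto
    then have "y \<in> I l" using xi unfolding Ieq y_def by auto
    then have "y \<in> (\<Union>l\<in>{0..m}. I l)" using that by auto
    then obtain J where J: "closed_interval_len J r" "y \<in> J" "card (J \<inter> X) \<ge> 1"
      using r unfolding R_def by blast
    obtain c d where cd: "J = {c..d}" "d - c = r" using J(1) closed_interval_len_def by auto
    have "J \<inter> X \<noteq> {}" using J(3) by (metis card.empty not_one_le_zero)
    then obtain k where k: "k \<le> n" "x k \<in> J" using assms(5) by auto
    have "x k \<le> x i \<or> x (i+1) \<le> x k"
    proof (cases "k \<le> i")
      case True then show ?thesis using monox[of k i] iq by auto
    next
      case False then show ?thesis using monox[of "i+1" k] k by auto
    qed
    then show "(x (i+1) - x i) / 2 \<le> r" using k(2) J(2) cd unfolding y_def by auto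
  qed
  show ?thesis
  proof
    fix l assume l: "l \<in> {0..m}"
    then have lm: "l \<le> m" by simp
    have r0nn: "0 \<le> r0" using r0ge[OF lm order.refl] pq[OF lm] strict[of "p l" "p l + 1"] by auto
    have ex: "\<exists>(nl::nat) U. (\<forall>j\<in>{1..nl}. closed_interval_len (U j) r0 \<and> U j \<inter> x ` {p l..q l} \<noteq> {}) \<and>
           (\<forall>j\<in>{1..<nl}. U j \<inter> U (j+1) \<noteq> {}) \<and> {x (p l)..x (q l)} = (\<Union>j\<in>{1..nl}. U j)"
    proof (rule cover[of "p l" "q l" r0 x])
      show "p l < q l" using pq[OF lm] by simp
      show "0 \<le> r0" by fact
      show "r0 \<le> x (q l) - x (p l)" using r0le hminle[OF lm] by simp
      show "x (p l) \<le> x k \<and> x k \<le> x (q l)" if "p l \<le> k" "k \<le> q l" for k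
        using monox that pq[OF lm] by auto
      show "x k \<le> x (Suc k) \<and> x (Suc k) - x k \<le> 2 * r0" if "p l \<le> k" "k < q l" for k
        using r0ge[OF lm that] xs[of k] that pq[OF lm] by auto
    qed
    then obtain nl :: nat and U where U: "\<forall>j\<in>{1..nl}. closed_interval_len (U j) r0 \<and> U j \<inter> x ` {p l..q l} \<noteq> {}"
      "\<forall>j\<in>{1..<nl}. U j \<inter> U (j+1) \<noteq> {}" "{x (p l)..x (q l)} = (\<Union>j\<in>{1..nl}. U j)" by blast
    have "card (U j \<inter> X) \<ge> 1" if "j \<in> {1..nl}" for j
    proof -
      have "U j \<inter> X \<noteq> {}" using U(1) that pq[OF lm] assms(5) by fastforce
      then have "card (U j \<inter> X) > 0" using finX by (subst card_gt_0_iff) auto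
      then show ?thesis by simp
    qed
    then show "\<exists>(nl::nat) (U::nat \<Rightarrow> real set).
           (\<forall>j\<in>{1..nl}. closed_interval_len (U j) r0 \<and> card (U j \<inter> X) \<ge> 1) \<and>
           (\<forall>j\<in>{1..<nl}. U j \<inter> U (j + 1) \<noteq> {}) \<and>
           I l = (\<Union>j\<in>{1..nl}. U j)"
      using U Ieq[of l] by (intro exI[of _ nl] exI[of _ U]) auto
  qed
qed

end
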